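(* Let $V$ be a real vector space of dimension $2n$ endowed with a linear map $J:V\to V$ with $J^2=-\mathrm{Id}$, and let $T_1,T_2$ be two $(0,6)$-tensors on $V$ such that, for $i=1,2$ and all $x_1,\dots,x_6\in V$: (a) $T_i(x_1,x_2,x_3,x_4,x_5,x_6)=-T_i(x_2,x_1,x_3,x_4,x_5,x_6)=-T_i(x_1,x_2,x_4,x_3,x_5,x_6)=T_i(x_3,x_4,x_1,x_2,x_5,x_6)$; (b) $T_i(x_1,x_2,x_3,x_4,x_5,x_6)+T_i(x_1,x_3,x_4,x_2,x_5,x_6)+T_i(x_1,x_4,x_2,x_3,x_5,x_6)=0$; (c) $T_i(x_1,x_2,x_3,x_4,x_5,x_6)=T_i(Jx_1,Jx_2,x_3,x_4,x_5,x_6)=T_i(x_1,x_2,Jx_3,Jx_4,x_5,x_6)$; (d) $T_i(x_1,x_2,x_3,x_4,x_5,x_6)=-T_i(x_1,x_2,x_3,x_4,x_6,x_5)=T_i(x_1,x_2,x_3,x_4,Jx_5,Jx_6)$. If $T_1(u,Ju,Ju,u,v,Jv)=T_2(u,Ju,Ju,u,v,Jv)$ for all $u,v\in V$, then $T_1=T_2$. *)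

theory Defs
  imports "HOL-Analysis.Analysis"
begin

definition tensor06 :: "('a::real_vector \<Rightarrow> 'a \<Rightarrow> 'a \<Rightarrow> 'a \<Rightarrow> 'a \<Rightarrow> 'a \<Rightarrow> real) \<Rightarrow> bool" where
  "tensor06 T \<longleftrightarrow>
     (\<forall>x2 x3 x4 x5 x6. linear (\<lambda>x. T x x2 x3 x4 x5 x6)) \<and>
     (\<forall>x1 x3 x4 x5 x6. linear (\<lambda>x. T x1 x x3 x4 x5 x6)) \<and>
     (\<forall>x1 x2 x4 x5 x6. linear (\<lambda>x. T x1 x2 x x4 x5 x6)) \<and>
     (\<forall>x1 x2 x3 x5 x6. linear (\<lambda>x. T x1 x2 x3 x x5 x6)) \<and>
     (\<forall>x1 x2 x3 x4 x6. linear (\<lambda>x. T x1 x2 x3 x4 x x6)) \<and>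
     (\<forall>x1 x2 x3 x4 x5. linear (\<lambda>x. T x1 x2 x3 x4 x5 x))"

definition sym_conds :: "('a::real_vector \<Rightarrow> 'a) \<Rightarrow> ('a \<Rightarrow> 'a \<Rightarrow> 'a \<Rightarrow> 'a \<Rightarrow> 'a \<Rightarrow> 'a \<Rightarrow> real) \<Rightarrow> bool" where
  "sym_conds J T \<longleftrightarrow>
     (\<forall>x1 x2 x3 x4 x5 x6.
        T x1 x2 x3 x4 x5 x6 = - T x2 x1 x3 x4 x5 x6 \<and>
        T x1 x2 x3 x4 x5 x6 = - T x1 x2 x4 x3 x5 x6 \<and>
        T x1 x2 x3 x4 x5 x6 = T x3 x4 x1 x2 x5 x6 \<and>
        T x1 x2 x3 x4 x5 x6 + T x1 x3 x4 x2 x5 x6 + T x1 x4 x2 x3 x5 x6 = 0 \<and>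
        T x1 x2 x3 x4 x5 x6 = T (J x1) (J x2) x3 x4 x5 x6 \<and>
        T x1 x2 x3 x4 x5 x6 = T x1 x2 (J x3) (J x4) x5 x6 \<and>
        T x1 x2 x3 x4 x5 x6 = - T x1 x2 x3 x4 x6 x5 \<and>
        T x1 x2 x3 x4 x5 x6 = T x1 x2 x3 x4 (J x5) (J x6))"

end

theory Submission
  imports Defs
begin

locale ktens =
  fixes J :: "'a::real_vector \<Rightarrow> 'a"
    and T :: "'a \<Rightarrow> 'a \<Rightarrow> 'a \<Rightarrow> 'a \<Rightarrow> 'a \<Rightarrow> 'a \<Rightarrow> real"
  assumes Jadd: "J (x + y) = J x + J y" and Jneg: "J (- x) = - J x" and JJ: "J (J x) = - x"
    and a1: "T (x + y) x2 x3 x4 x5 x6 = T x x2 x3 x4 x5 x6 + T y x2 x3 x4 x5 x6"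
    and a2: "T x1 (x + y) x3 x4 x5 x6 = T x1 x x3 x4 x5 x6 + T x1 y x3 x4 x5 x6"
    and a3: "T x1 x2 (x + y) x4 x5 x6 = T x1 x2 x x4 x5 x6 + T x1 x2 y x4 x5 x6"
    and a4: "T x1 x2 x3 (x + y) x5 x6 = T x1 x2 x3 x x5 x6 + T x1 x2 x3 y x5 x6"
    and a5: "T x1 x2 x3 x4 (x + y) x6 = T x1 x2 x3 x4 x x6 + T x1 x2 x3 x4 y x6"
    and a6: "T x1 x2 x3 x4 x5 (x + y) = T x1 x2 x3 x4 x5 x + T x1 x2 x3 x4 x5 y"
    and n1: "T (- x) x2 x3 x4 x5 x6 = - T x x2 x3 x4 x5 x6"
    and n2: "T x1 (- x) x3 x4 x5 x6 = - T x1 x x3 x4 x5 x6"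
    and n3: "T x1 x2 (- x) x4 x5 x6 = - T x1 x2 x x4 x5 x6"
    and n4: "T x1 x2 x3 (- x) x5 x6 = - T x1 x2 x3 x x5 x6"
    and n5: "T x1 x2 x3 x4 (- x) x6 = - T x1 x2 x3 x4 x x6"
    and n6: "T x1 x2 x3 x4 x5 (- x) = - T x1 x2 x3 x4 x5 x"
    and s1: "T x1 x2 x3 x4 x5 x6 = - T x2 x1 x3 x4 x5 x6"
    and s2: "T x1 x2 x3 x4 x5 x6 = - T x1 x2 x4 x3 x5 x6"
    and s3: "T x1 x2 x3 x4 x5 x6 = T x3 x4 x1 x2 x5 x6"
    and s4: "T x1 x2 x3 x4 x5 x6 + T x1 x3 x4 x2 x5 x6 + T x1 x4 x2 x3 x5 x6 = 0"
    and s5: "T x1 x2 x3 x4 x5 x6 = T (J x1) (J x2) x3 x4 x5 x6"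
    and s6: "T x1 x2 x3 x4 x5 x6 = T x1 x2 (J x3) (J x4) x5 x6"
    and s7: "T x1 x2 x3 x4 x5 x6 = - T x1 x2 x3 x4 x6 x5"
    and s8: "T x1 x2 x3 x4 x5 x6 = T x1 x2 x3 x4 (J x5) (J x6)"
    and hyp: "T u (J u) (J u) u v (J v) = 0"
begin

lemma step1: "T u (J u) (J u) u a b = 0"
proof -
  have "\<And>v w. T u (J u) (J u) u v (J w) = 0"
  proof -
    fix v w
    have h: "T u (J u) (J u) u (v + w) (J (v + w)) = 0" by (rule hyp)
    have e1: "T u (J u) (J u) u w (J v) = T u (J u) (J u) u v (J w)"
      using s8[of u "J u" "J u" u w "J v"] s7[of u "J u" "J u" u "J w" v] JJ[of v]
      by (simp add: n6)
    show "T u (J u) (J u) u v (J w) = 0"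
      using h e1 hyp[of u v] hyp[of u w] by (simp add: Jadd a5 a6)
  qed
  from this[of a "- J b"] show ?thesis by (simp add: Jneg JJ n6)
qed

lemma step2: "T x y y x a b = 0"
proof -
  define K where "K x y = T x y y x a b" for x y
  define L where "L x y = T x (J y) (J y) x a b" for x y
  have B: "K x y + 3 * L x y = 0" for x y
  proof -
    have h1: "T (x + y) (J (x + y)) (J (x + y)) (x + y) a b = 0" using step1 by blast
    have h2: "T (x + - y) (J (x + - y)) (J (x + - y)) (x + - y) a b = 0" using step1 by blast
    have hx: "T x (J x) (J x) x a b = 0" using step1 by blast
    have hy: "T y (J y) (J y) y a b = 0" using step1 by blast
    have g1: "T x (J x) (J y) y a b = K x y + L x y"
    proof -
      have "T x (J x) y (J y) a b + T x y (J y) (J x) a b + T x (J y) (J x) y a b = 0" by (rule s4)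
      moreover have "T x (J x) (J y) y a b = - T x (J x) y (J y) a b" by (rule s2)
      moreover have "T x y (J y) (J x) a b = K x y"
        using s6[of x y "J y" "J x" a b] by (simp add: K_def JJ n3 n4)
      moreover have "T x (J y) (J x) y a b = L x y"
        using s6[of x "J y" "J x" y a b] s2[of x "J y" x "J y" a b] by (simp add: L_def JJ n3)
      ultimately show ?thesis by linarith
    qed
    have g2: "T y (J y) (J x) x a b = T x (J x) (J y) y a b"
      using s3[of y "J y" "J x" x a b] s1[of "J x" x y "J y" a b] s2[of x "J x" "J y" y a b] by simp
    have g3: "T x (J y) (J x) y a b = L x y"
      using s6[of x "J y" "J x" y a b] s2[of x "J y" x "J y" a b] by (simp add: L_def JJ n3)
    have g4: "T y (J x) (J y) x a b = T x (J y) (J x) y a b"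
      using s3[of y "J x" "J y" x a b] s1[of "J y" x y "J x" a b] s2[of x "J y" "J x" y a b] by simp
    have g5: "T y (J x) (J x) y a b = L x y"
    proof -
      have "T y (J x) (J x) y a b = T (J x) y y (J x) a b"
        using s3[of y "J x" "J x" y a b] by simp
      also have "\<dots> = T (J (J x)) (J y) (J y) (J (J x)) a b"
        using s5[of "J x" y y "J x" a b] s6[of "J (J x)" "J y" y "J x" a b] by simp
      also have "\<dots> = L x y" by (simp add: L_def JJ n1 n4)
      finally show ?thesis .
    qed
    have g6: "T x (J y) (J y) x a b = L x y" by (simp add: L_def)
    show ?thesis
    proof -
      have e1: "T (x + y) (J (x + y)) (J (x + y)) (x + y) a b = T x (J x) (J x) x a b + T x (J x) (J x) y a b + T x (J x) (J y) x a b + T x (J x) (J y) y a b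
         + T x (J y) (J x) x a b + T x (J y) (J x) y a b + T x (J y) (J y) x a b + T x (J y) (J y) y a b
         + T y (J x) (J x) x a b + T y (J x) (J x) y a b + T y (J x) (J y) x a b + T y (J x) (J y) y a b
         + T y (J y) (J x) x a b + T y (J y) (J x) y a b + T y (J y) (J y) x a b + T y (J y) (J y) y a b"
        by (simp only: Jadd a1 a2 a3 a4 add.assoc)
      have e2: "T (x + - y) (J (x + - y)) (J (x + - y)) (x + - y) a b = T x (J x) (J x) x a b - T x (J x) (J x) y a b - T x (J x) (J y) x a b + T x (J x) (J y) y a b
         - T x (J y) (J x) x a b + T x (J y) (J x) y a b + T x (J y) (J y) x a b - T x (J y) (J y) y a b
         - T y (J x) (J x) x a b + T y (J x) (J x) y a b + T y (J x) (J y) x a b - T y (J x) (J y) y a b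
         + T y (J y) (J x) x a b - T y (J y) (J x) y a b - T y (J y) (J y) x a b + T y (J y) (J y) y a b"
        by (simp only: Jadd Jneg a1 a2 a3 a4 n1 n2 n3 n4 minus_minus diff_conv_add_uminus add.assoc)
      show ?thesis using h1 h2 e1 e2 hx hy g1 g2 g3 g4 g5 g6 by linarith
    qed
  qed
  have "K x (J y) + 3 * L x (J y) = 0" by (rule B)
  hence "L x y + 3 * K x y = 0" by (simp add: K_def L_def JJ n2 n3)
  with B[of x y] have "K x y = 0" by linarith
  thus ?thesis by (simp add: K_def)
qed

lemma step3: "T x y z w a b = 0"
proof -
  have c1: "T x y y z a b = 0" for x y z
  proof -
    have "T (x + z) y y (x + z) a b = 0" by (rule step2)
    moreover have "T z y y x a b = T x y y z a b"
      using s3[of z y y x a b] s1[of y x z y a b] s2[of x y z y a b] by simp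
    ultimately show ?thesis using step2[of x y] step2[of z y] by (simp add: a1 a4)
  qed
  have c2: "T x y w z a b = - T x w y z a b" for x y w z
  proof -
    have "T x (y + w) (y + w) z a b = 0" by (rule c1)
    thus ?thesis using c1[of x y z] c1[of x w z] by (simp add: a2 a3)
  qed
  have "T x y z w a b + T x z w y a b + T x w y z a b = 0" by (rule s4)
  moreover have "T x z w y a b = T x y z w a b"
    using c2[of x z w y] s2[of x w z y a b] c2[of x w y z] s2[of x y z w a b] by simp
  moreover have "T x w y z a b = T x y z w a b"
    using c2[of x w y z] s2[of x y z w a b] by simp
  ultimately show ?thesis by linarith
qed

end

lemma tensor06_D1: "tensor06 T \<Longrightarrow> linear (\<lambda>x. T x x2 x3 x4 x5 x6)"
  unfolding tensor06_def by simp

lemma tensor06_D2: "tensor06 T \<Longrightarrow> linear (\<lambda>x. T x1 x x3 x4 x5 x6)"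
  unfolding tensor06_def by simp

lemma tensor06_D3: "tensor06 T \<Longrightarrow> linear (\<lambda>x. T x1 x2 x x4 x5 x6)"
  unfolding tensor06_def by simp

lemma tensor06_D4: "tensor06 T \<Longrightarrow> linear (\<lambda>x. T x1 x2 x3 x x5 x6)"
  unfolding tensor06_def by simp

lemma tensor06_D5: "tensor06 T \<Longrightarrow> linear (\<lambda>x. T x1 x2 x3 x4 x x6)"
  unfolding tensor06_def by simp

lemma tensor06_D6: "tensor06 T \<Longrightarrow> linear (\<lambda>x. T x1 x2 x3 x4 x5 x)"
  unfolding tensor06_def by simp

lemma sym_condsD1: "sym_conds J T \<Longrightarrow> T x1 x2 x3 x4 x5 x6 = - T x2 x1 x3 x4 x5 x6"
  unfolding sym_conds_def by blast

lemma sym_condsD2: "sym_conds J T \<Longrightarrow> T x1 x2 x3 x4 x5 x6 = - T x1 x2 x4 x3 x5 x6"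
  unfolding sym_conds_def by blast

lemma sym_condsD3: "sym_conds J T \<Longrightarrow> T x1 x2 x3 x4 x5 x6 = T x3 x4 x1 x2 x5 x6"
  unfolding sym_conds_def by blast

lemma sym_condsD4: "sym_conds J T \<Longrightarrow> T x1 x2 x3 x4 x5 x6 + T x1 x3 x4 x2 x5 x6 + T x1 x4 x2 x3 x5 x6 = 0"
  unfolding sym_conds_def by blast

lemma sym_condsD5: "sym_conds J T \<Longrightarrow> T x1 x2 x3 x4 x5 x6 = T (J x1) (J x2) x3 x4 x5 x6"
  unfolding sym_conds_def by blast

lemma sym_condsD6: "sym_conds J T \<Longrightarrow> T x1 x2 x3 x4 x5 x6 = T x1 x2 (J x3) (J x4) x5 x6"
  unfolding sym_conds_def by blast

lemma sym_condsD7: "sym_conds J T \<Longrightarrow> T x1 x2 x3 x4 x5 x6 = - T x1 x2 x3 x4 x6 x5"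
  unfolding sym_conds_def by blast

lemma sym_condsD8: "sym_conds J T \<Longrightarrow> T x1 x2 x3 x4 x5 x6 = T x1 x2 x3 x4 (J x5) (J x6)"
  unfolding sym_conds_def by blast

lemma neg_helper: "a1 = - b1 \<Longrightarrow> a2 = - b2 \<Longrightarrow> a1 - a2 = - (b1 - (b2::real))" by simp

theorem mainTheorem2:
  fixes J :: "'a::euclidean_space \<Rightarrow> 'a"
    and T1 T2 :: "'a \<Rightarrow> 'a \<Rightarrow> 'a \<Rightarrow> 'a \<Rightarrow> 'a \<Rightarrow> 'a \<Rightarrow> real"
    and n :: nat
  assumes "DIM('a) = 2 * n"
    and "linear J"
    and "\<And>x. J (J x) = - x"
    and "tensor06 T1" and "tensor06 T2"
    and "sym_conds J T1" and "sym_conds J T2"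
    and "\<And>u v. T1 u (J u) (J u) u v (J v) = T2 u (J u) (J u) u v (J v)"
  shows "T1 = T2"
proof -
  note L1 = tensor06_D1[OF assms(4)] tensor06_D2[OF assms(4)] tensor06_D3[OF assms(4)] tensor06_D4[OF assms(4)] tensor06_D5[OF assms(4)] tensor06_D6[OF assms(4)]
  note L2 = tensor06_D1[OF assms(5)] tensor06_D2[OF assms(5)] tensor06_D3[OF assms(5)] tensor06_D4[OF assms(5)] tensor06_D5[OF assms(5)] tensor06_D6[OF assms(5)]
  interpret ktens J "\<lambda>x1 x2 x3 x4 x5 x6. T1 x1 x2 x3 x4 x5 x6 - T2 x1 x2 x3 x4 x5 x6"
  proof (unfold_locales, goal_cases)
    case 1 show ?case using assms(2) by (rule linear_add)
  next case 2 show ?case using assms(2) by (rule linear_neg)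
  next case 3 show ?case by (rule assms(3))
  next case 4 show ?case using linear_add[OF L1(1)] linear_add[OF L2(1)] by simp
  next case 5 show ?case using linear_add[OF L1(2)] linear_add[OF L2(2)] by simp
  next case 6 show ?case using linear_add[OF L1(3)] linear_add[OF L2(3)] by simp
  next case 7 show ?case using linear_add[OF L1(4)] linear_add[OF L2(4)] by simp
  next case 8 show ?case using linear_add[OF L1(5)] linear_add[OF L2(5)] by simp
  next case 9 show ?case using linear_add[OF L1(6)] linear_add[OF L2(6)] by simp
  next case 10 show ?case using linear_neg[OF L1(1)] linear_neg[OF L2(1)] by simp
  next case 11 show ?case using linear_neg[OF L1(2)] linear_neg[OF L2(2)] by simp
  next case 12 show ?case using linear_neg[OF L1(3)] linear_neg[OF L2(3)] by simp
  next case 13 show ?case using linear_neg[OF L1(4)] linear_neg[OF L2(4)] by simp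
  next case 14 show ?case using linear_neg[OF L1(5)] linear_neg[OF L2(5)] by simp
  next case 15 show ?case using linear_neg[OF L1(6)] linear_neg[OF L2(6)] by simp
  next case (16 x1 x2 x3 x4 x5 x6) show ?case using sym_condsD1[OF assms(6), of x1 x2 x3 x4 x5 x6] sym_condsD1[OF assms(7), of x1 x2 x3 x4 x5 x6] by (simp only: ; linarith)
  next case (17 x1 x2 x3 x4 x5 x6) show ?case using sym_condsD2[OF assms(6), of x1 x2 x3 x4 x5 x6] sym_condsD2[OF assms(7), of x1 x2 x3 x4 x5 x6] by (simp only: ; linarith)
  next case (18 x1 x2 x3 x4 x5 x6) show ?case using sym_condsD3[OF assms(6), of x1 x2 x3 x4 x5 x6] sym_condsD3[OF assms(7), of x1 x2 x3 x4 x5 x6] by (simp only: ; linarith)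
  next case (19 x1 x2 x3 x4 x5 x6) show ?case using sym_condsD4[OF assms(6), of x1 x2 x3 x4 x5 x6] sym_condsD4[OF assms(7), of x1 x2 x3 x4 x5 x6] by (simp only: ; linarith)
  next case (20 x1 x2 x3 x4 x5 x6) show ?case using sym_condsD5[OF assms(6), of x1 x2 x3 x4 x5 x6] sym_condsD5[OF assms(7), of x1 x2 x3 x4 x5 x6] by (simp only: ; linarith)
  next case (21 x1 x2 x3 x4 x5 x6) show ?case by (rule arg_cong2[where f="(-)", OF sym_condsD6[OF assms(6)] sym_condsD6[OF assms(7)]])
  next case 22 show ?case by (rule neg_helper[OF sym_condsD7[OF assms(6)] sym_condsD7[OF assms(7)]])
  next case (23 x1 x2 x3 x4 x5 x6) show ?case by (rule arg_cong2[where f="(-)", OF sym_condsD8[OF assms(6)] sym_condsD8[OF assms(7)]])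
  next case (24 u v) show ?case by (simp only: assms(8) diff_self)
  qed
  show ?thesis
  proof (intro ext)
    fix x1 x2 x3 x4 x5 x6
    have "T1 x1 x2 x3 x4 x5 x6 - T2 x1 x2 x3 x4 x5 x6 = 0" by (rule step3)
    then show "T1 x1 x2 x3 x4 x5 x6 = T2 x1 x2 x3 x4 x5 x6" by simp
  qed
qed

end
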